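(* Let $\mathbf{Y}\sim\mathcal{SUT}_{d,m}(\boldsymbol{\xi},\boldsymbol{\Omega},\boldsymbol{\Delta},\boldsymbol{\tau},\bar{\boldsymbol{\Gamma}},\nu)$ with $d=d_1+d_2$, $d_1,d_2\ge1$, partitioned as $\mathbf{Y}=(\mathbf{Y}_1^\top,\mathbf{Y}_2^\top)^\top$, $\boldsymbol{\xi}=(\boldsymbol{\xi}_1^\top,\boldsymbol{\xi}_2^\top)^\top$, $\boldsymbol{\Omega}=(\boldsymbol{\Omega}_{ij})_{i,j=1,2}$, $\boldsymbol{\Delta}=(\boldsymbol{\Delta}_1^\top,\boldsymbol{\Delta}_2^\top)^\top$, with $\mathbf{Y}_i,\boldsymbol{\xi}_i\in\mathbb{R}^{d_i}$, $\boldsymbol{\Omega}_{ij}\in\mathbb{R}^{d_i\times d_j}$, $\boldsymbol{\Delta}_i\in\mathbb{R}^{d_i\times m}$; let $\boldsymbol{\omega}_i=\mathrm{diag}(\boldsymbol{\Omega}_{ii})^{1/2}$ and $\bar{\boldsymbol{\Omega}}_{ij}=\boldsymbol{\omega}_i^{-1}\boldsymbol{\Omega}_{ij}\boldsymbol{\omega}_j^{-1}$. Then the conditional distribution of $\mathbf{Y}_2$ given $\mathbf{Y}_1>\mathbf{0}$ (componentwise) is $$(\mathbf{Y}_2\mid\mathbf{Y}_1>\mathbf{0})\sim\mathcal{SUT}_{d_2,d_1+m}(\boldsymbol{\xi}_2,\boldsymbol{\Omega}_{22},\boldsymbol{\Delta}_{2\neg1},\boldsymbol{\tau}_{2\neg1},\bar{\boldsymbol{\Gamma}}_{2\neg1},\nu),$$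 where $\boldsymbol{\Delta}_{2\neg1}=\begin{pmatrix}\boldsymbol{\Delta}_2&\bar{\boldsymbol{\Omega}}_{21}\end{pmatrix}$, $\bar{\boldsymbol{\Gamma}}_{2\neg1}=\begin{pmatrix}\bar{\boldsymbol{\Gamma}}&\boldsymbol{\Delta}_1^\top\\ \boldsymbol{\Delta}_1&\bar{\boldsymbol{\Omega}}_{11}\end{pmatrix}$, and $\boldsymbol{\tau}_{2\neg1}=\begin{pmatrix}\boldsymbol{\tau}\\ \boldsymbol{\omega}_1^{-1}\boldsymbol{\xi}_1\end{pmatrix}$.
   Context: Notation: $\mathcal{T}_k(\boldsymbol{\mu},\boldsymbol{\Sigma},\nu)$ is the $k$-dimensional Student $t$ distribution with location $\boldsymbol{\mu}$, dispersion $\boldsymbol{\Sigma}$ and $\nu>0$ degrees of freedom. For dimension $p$ and latent dimension $q$: parameters are $\boldsymbol{\xi}\in\mathbb{R}^p$; $\boldsymbol{\Omega}$ a $p\times p$ positive definite matrix, $\boldsymbol{\omega}=\mathrm{diag}(\boldsymbol{\Omega})^{1/2}$, $\bar{\boldsymbol{\Omega}}=\boldsymbol{\omega}^{-1}\boldsymbol{\Omega}\boldsymbol{\omega}^{-1}$; $\boldsymbol{\Delta}$ a $p\times q$ matrix; $\bar{\boldsymbol{\Gamma}}$ a $q\times q$ correlation matrix; $\boldsymbol{\tau}\in\mathbb{R}^q$; $\nu>0$; with $\bar{\boldsymbol{\Omega}}^*=\begin{pmatrix}\bar{\boldsymbol{\Gamma}}&\boldsymbol{\Delta}^\top\\ \boldsymbol{\Delta}&\bar{\boldsymbol{\Omega}}\end{pmatrix}$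 positive definite. If $(\mathbf{U}_0^\top,\mathbf{U}_1^\top)^\top\sim\mathcal{T}_{q+p}(\mathbf{0},\bar{\boldsymbol{\Omega}}^*,\nu)$ ($\mathbf{U}_0\in\mathbb{R}^q$, $\mathbf{U}_1\in\mathbb{R}^p$) and $\mathbf{Z}$ has the conditional distribution of $\mathbf{U}_1$ given $\mathbf{U}_0+\boldsymbol{\tau}>\mathbf{0}$ (componentwise), then $\mathbf{Y}=\boldsymbol{\xi}+\boldsymbol{\omega}\mathbf{Z}$ has distribution $\mathcal{SUT}_{p,q}(\boldsymbol{\xi},\boldsymbol{\Omega},\boldsymbol{\Delta},\boldsymbol{\tau},\bar{\boldsymbol{\Gamma}},\nu)$. *)

theory Defs
  imports "HOL-Probability.Probability"
begin

text \<open>Matrices are real^'c^'r: A$i$j is the entry in row i, column j.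
  Dimensions are encoded by finite index types; block structure by sum types.\<close>

definition pos_def_mat :: "real^'n::finite^'n \<Rightarrow> bool" where
  "pos_def_mat A \<longleftrightarrow> transpose A = A \<and> (\<forall>x. x \<noteq> 0 \<longrightarrow> x \<bullet> (A *v x) > 0)"

definition corr_matrix :: "real^'n::finite^'n \<Rightarrow> bool" where
  "corr_matrix A \<longleftrightarrow> transpose A = A \<and> (\<forall>x. x \<bullet> (A *v x) \<ge> 0) \<and> (\<forall>i. A$i$i = 1)"

definition corr_of :: "real^'n::finite^'n \<Rightarrow> real^'n^'n" where
  "corr_of \<Omega> = (\<chi> i j. \<Omega>$i$j / (sqrt (\<Omega>$i$i) * sqrt (\<Omega>$j$j)))"

definition blockmat :: "real^'c1::finite^'r1::finite \<Rightarrow> real^'c2::finite^'r1 \<Rightarrow> real^'c1^'r2::finite \<Rightarrow> real^'c2^'r2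
    \<Rightarrow> real^('c1 + 'c2)^('r1 + 'r2)" where
  "blockmat A B C D = (\<chi> i j. case i of
      Inl a \<Rightarrow> (case j of Inl b \<Rightarrow> A$a$b | Inr b \<Rightarrow> B$a$b)
    | Inr a \<Rightarrow> (case j of Inl b \<Rightarrow> C$a$b | Inr b \<Rightarrow> D$a$b))"

definition hcat :: "real^'c1::finite^'r::finite \<Rightarrow> real^'c2::finite^'r \<Rightarrow> real^('c1 + 'c2)^'r" where
  "hcat A B = (\<chi> i j. case j of Inl b \<Rightarrow> A$i$b | Inr b \<Rightarrow> B$i$b)"

definition vjoin :: "real^'a::finite \<Rightarrow> real^'b::finite \<Rightarrow> real^('a + 'b)" where
  "vjoin u v = (\<chi> i. case i of Inl a \<Rightarrow> u$a | Inr b \<Rightarrow> v$b)"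

definition blk11 :: "real^('c1::finite + 'c2::finite)^('r1::finite + 'r2::finite) \<Rightarrow> real^'c1^'r1" where
  "blk11 M = (\<chi> i j. M$(Inl i)$(Inl j))"
definition blk12 :: "real^('c1::finite + 'c2::finite)^('r1::finite + 'r2::finite) \<Rightarrow> real^'c2^'r1" where
  "blk12 M = (\<chi> i j. M$(Inl i)$(Inr j))"
definition blk21 :: "real^('c1::finite + 'c2::finite)^('r1::finite + 'r2::finite) \<Rightarrow> real^'c1^'r2" where
  "blk21 M = (\<chi> i j. M$(Inr i)$(Inl j))"
definition blk22 :: "real^('c1::finite + 'c2::finite)^('r1::finite + 'r2::finite) \<Rightarrow> real^'c2^'r2" where
  "blk22 M = (\<chi> i j. M$(Inr i)$(Inr j))"
definition rows1 :: "real^'c::finite^('r1::finite + 'r2::finite) \<Rightarrow> real^'c^'r1" where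
  "rows1 M = (\<chi> i. M$(Inl i))"
definition rows2 :: "real^'c::finite^('r1::finite + 'r2::finite) \<Rightarrow> real^'c^'r2" where
  "rows2 M = (\<chi> i. M$(Inr i))"
definition vfst :: "real^('a::finite + 'b::finite) \<Rightarrow> real^'a" where
  "vfst v = (\<chi> i. v$(Inl i))"
definition vsnd :: "real^('a::finite + 'b::finite) \<Rightarrow> real^'b" where
  "vsnd v = (\<chi> i. v$(Inr i))"

definition student_t :: "real^'n::finite \<Rightarrow> real^'n^'n \<Rightarrow> real \<Rightarrow> (real^'n) measure" where
  "student_t \<mu> \<Sigma> \<nu> = density lborel (\<lambda>x. ennreal
     (Gamma ((\<nu> + real CARD('n)) / 2)
       / (Gamma (\<nu> / 2) * (\<nu> * pi) powr (real CARD('n) / 2) * sqrt (det \<Sigma>))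
       * (1 + ((x - \<mu>) \<bullet> (matrix_inv \<Sigma> *v (x - \<mu>))) / \<nu>) powr (- (\<nu> + real CARD('n)) / 2)))"

definition SUT_params :: "real^'p::finite^'p \<Rightarrow> real^'q::finite^'p \<Rightarrow> real^'q^'q \<Rightarrow> real \<Rightarrow> bool" where
  "SUT_params \<Omega> \<Delta> \<Gamma> \<nu> \<longleftrightarrow> pos_def_mat \<Omega> \<and> corr_matrix \<Gamma> \<and> \<nu> > 0 \<and>
     pos_def_mat (blockmat \<Gamma> (transpose \<Delta>) \<Delta> (corr_of \<Omega>))"

text \<open>Law of Y = xi + omega Z, Z = (U1 | U0 + tau > 0), (U0,U1) ~ T_{q+p}(0, Omega*, nu)\<close>
definition SUT :: "real^'p::finite \<Rightarrow> real^'p^'p \<Rightarrow> real^'q::finite^'p \<Rightarrow> real^'q \<Rightarrow> real^'q^'q \<Rightarrow> real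
    \<Rightarrow> (real^'p) measure" where
  "SUT \<xi> \<Omega> \<Delta> \<tau> \<Gamma> \<nu> =
     distr (uniform_measure
              (student_t (0 :: real^('q + 'p)) (blockmat \<Gamma> (transpose \<Delta>) \<Delta> (corr_of \<Omega>)) \<nu>)
              {u. \<forall>i. vfst u $ i + \<tau> $ i > 0})
           borel (\<lambda>u. \<chi> j. \<xi> $ j + sqrt (\<Omega> $ j $ j) * vsnd u $ j)"

end

theory Submission
  imports Defs
begin

definition rix :: "('n'::finite \<Rightarrow> 'n::finite) \<Rightarrow> real^'n^'n \<Rightarrow> real^'n'^'n'" where
  "rix \<alpha> A = (\<chi> i j. A $ \<alpha> i $ \<alpha> j)"
definition rv :: "('n'::finite \<Rightarrow> 'n::finite) \<Rightarrow> real^'n \<Rightarrow> real^'n'" where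
  "rv \<alpha> x = (\<chi> i. x $ \<alpha> i)"

lemma rix_mult: assumes "bij \<alpha>" shows "rix \<alpha> (A ** B) = rix \<alpha> A ** rix \<alpha> B"
proof -
  have "(\<Sum>k\<in>UNIV. A $ \<alpha> i $ \<alpha> k * B $ \<alpha> k $ \<alpha> j) = (\<Sum>k\<in>UNIV. A $ \<alpha> i $ k * B $ k $ \<alpha> j)" for i j
    using sum.reindex_bij_betw[OF assms, of "\<lambda>k. A $ \<alpha> i $ k * B $ k $ \<alpha> j"] by simp
  then show ?thesis by (simp add: rix_def matrix_matrix_mult_def vec_eq_iff)
qed

lemma rix_mat1: assumes "bij \<alpha>" shows "rix \<alpha> (mat 1) = mat 1"
  using assms by (auto simp: rix_def mat_def vec_eq_iff bij_def inj_eq)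

lemma matrix_inv_eqI: fixes A B :: "real^'n::finite^'n"
  assumes "A ** B = mat 1" "B ** A = mat 1" shows "matrix_inv A = B"
  unfolding matrix_inv_def
proof (rule some_equality)
  fix C assume C: "A ** C = mat 1 \<and> C ** A = mat 1"
  have "C = C ** (A ** B)" using assms by (simp add: matrix_mul_rid)
  also have "\<dots> = (C ** A) ** B" by (simp add: matrix_mul_assoc)
  also have "\<dots> = B" using C by (simp add: matrix_mul_lid)
  finally show "C = B" .
qed (use assms in auto)

lemma rix_inv: assumes "bij \<alpha>" "invertible A" shows "matrix_inv (rix \<alpha> A) = rix \<alpha> (matrix_inv A)"
proof -
  obtain B where B: "A ** B = mat 1" "B ** A = mat 1" using assms(2) invertible_def by blast
  have "matrix_inv A = B" using B matrix_inv_eqI by blast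
  moreover have "matrix_inv (rix \<alpha> A) = rix \<alpha> B"
    by (rule matrix_inv_eqI) (simp_all add: rix_mult[OF assms(1), symmetric] B rix_mat1[OF assms(1)])
  ultimately show ?thesis by simp
qed

lemma rix_quad: assumes "bij \<alpha>" shows "rv \<alpha> x \<bullet> (rix \<alpha> B *v rv \<alpha> x) = x \<bullet> (B *v x)"
proof -
  have "(\<Sum>k\<in>UNIV. B $ \<alpha> i $ \<alpha> k * x $ \<alpha> k) = (\<Sum>k\<in>UNIV. B $ \<alpha> i $ k * x $ k)" for i
    using sum.reindex_bij_betw[OF assms, of "\<lambda>k. B $ \<alpha> i $ k * x $ k"] by simp
  then have "rv \<alpha> x \<bullet> (rix \<alpha> B *v rv \<alpha> x) = (\<Sum>i\<in>UNIV. x $ \<alpha> i * (\<Sum>k\<in>UNIV. B $ \<alpha> i $ k * x $ k))"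
    by (simp add: rix_def rv_def inner_vec_def matrix_vector_mult_def)
  also have "\<dots> = (\<Sum>i\<in>UNIV. x $ i * (\<Sum>k\<in>UNIV. B $ i $ k * x $ k))"
    using sum.reindex_bij_betw[OF assms, of "\<lambda>i. x $ i * (\<Sum>k\<in>UNIV. B $ i $ k * x $ k)"] by simp
  also have "\<dots> = x \<bullet> (B *v x)" by (simp add: inner_vec_def matrix_vector_mult_def)
  finally show ?thesis .
qed

lemma rix_det: assumes "bij \<alpha>" shows "det (rix \<alpha> A) = det A"
proof -
  let ?\<phi> = "\<lambda>\<pi> x. \<alpha> (\<pi> (inv \<alpha> x))"
  have bb: "bij_betw ?\<phi> {\<pi>. \<pi> permutes (UNIV::'a set)} {\<pi>. \<pi> permutes (UNIV::'b set)}"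
    using bij_betw_permutations[OF assms] by simp
  have sg: "sign (?\<phi> q) = sign q" if "q permutes UNIV" for q
  proof -
    have "?\<phi> q = map_permutation UNIV \<alpha> q"
      using assms by (auto simp: map_permutation_def restrict_id_def fun_eq_iff bij_def)
    then show ?thesis using sign_map_permutation[of \<alpha> UNIV q] that assms by (simp add: bij_def)
  qed
  have pr: "(\<Prod>j\<in>UNIV. A $ j $ ?\<phi> q j) = (\<Prod>i\<in>UNIV. A $ \<alpha> i $ \<alpha> (q i))" for q
    using prod.reindex_bij_betw[OF assms, of "\<lambda>j. A $ j $ ?\<phi> q j"] assms
    by (simp add: bij_def inv_f_f)
  have "det A = (\<Sum>p\<in>{\<pi>. \<pi> permutes (UNIV::'b set)}. of_int (sign p) * (\<Prod>j\<in>UNIV. A $ j $ p j))"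
    by (simp add: det_def)
  also have "\<dots> = (\<Sum>q\<in>{\<pi>. \<pi> permutes (UNIV::'a set)}. of_int (sign (?\<phi> q)) * (\<Prod>j\<in>UNIV. A $ j $ ?\<phi> q j))"
    using sum.reindex_bij_betw[OF bb, of "\<lambda>p. of_int (sign p) * (\<Prod>j\<in>UNIV. A $ j $ p j)"] by simp
  also have "\<dots> = (\<Sum>q\<in>{\<pi>. \<pi> permutes (UNIV::'a set)}. of_int (sign q) * (\<Prod>i\<in>UNIV. A $ \<alpha> i $ \<alpha> (q i)))"
    by (rule sum.cong) (use sg pr in simp_all)
  also have "\<dots> = det (rix \<alpha> A)" by (simp add: det_def rix_def)
  finally show ?thesis by simp
qed

lemma prod_Basis_cart: "(\<Prod>b\<in>(Basis::(real^'n::finite) set). f b) = (\<Prod>i\<in>UNIV. f (axis i 1))"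
proof -
  have "(Basis::(real^'n) set) = range (\<lambda>i. axis i 1)" by (auto simp: Basis_vec_def)
  moreover have "inj (\<lambda>i::'n. axis i (1::real))" by (auto simp: inj_def axis_eq_axis)
  ultimately show ?thesis using prod.reindex[of "\<lambda>i::'n. axis i (1::real)" UNIV f] by simp
qed

lemma rv_cont: "continuous_on UNIV (rv \<alpha>)"
  unfolding rv_def by (intro continuous_on_vec_lambda continuous_on_component continuous_on_id)

lemma rv_meas[measurable]: "rv \<alpha> \<in> borel_measurable borel"
  by (rule borel_measurable_continuous_onI[OF rv_cont])

lemma lborel_rv: assumes "bij (\<alpha> :: 'n'::finite \<Rightarrow> 'n::finite)"
  shows "distr lborel borel (rv \<alpha>) = (lborel :: (real^'n') measure)"
proof (rule lborel_eqI[symmetric])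
  fix l u :: "real^'n'"
  assume le: "\<And>b. b \<in> Basis \<Longrightarrow> l \<bullet> b \<le> u \<bullet> b"
  have lei: "l $ i \<le> u $ i" for i using le[of "axis i 1"] by (auto simp: Basis_vec_def inner_axis)
  let ?l = "rv (inv \<alpha>) l" and ?u = "rv (inv \<alpha>) u"
  have eq: "rv \<alpha> -` box l u = box ?l ?u"
  proof -
    have "(\<forall>i. l $ i < x $ \<alpha> i \<and> x $ \<alpha> i < u $ i) \<longleftrightarrow> (\<forall>j. l $ inv \<alpha> j < x $ j \<and> x $ j < u $ inv \<alpha> j)" for x
      using assms by (metis bij_inv_eq_iff)
    then show ?thesis by (auto simp: mem_box_cart rv_def)
  qed
  have "emeasure (distr lborel borel (rv \<alpha>)) (box l u) = emeasure lborel (box ?l ?u)"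
    by (simp add: emeasure_distr eq)
  also have "\<dots> = (\<Prod>j\<in>UNIV. (?u - ?l) $ j)"
  proof -
    have "\<forall>b\<in>Basis. ?l \<bullet> b \<le> ?u \<bullet> b" using lei by (auto simp: Basis_vec_def inner_axis rv_def)
    then show ?thesis by (simp add: emeasure_lborel_box_eq prod_Basis_cart inner_axis)
  qed
  also have "\<dots> = (\<Prod>i\<in>UNIV. (u - l) $ i)"
    using prod.reindex_bij_betw[OF assms, of "\<lambda>j. (?u - ?l) $ j"] assms
    by (simp add: rv_def bij_def inv_f_f)
  also have "\<dots> = (\<Prod>b\<in>Basis. (u - l) \<bullet> b)" by (simp add: prod_Basis_cart inner_axis)
  finally show "emeasure (distr lborel borel (rv \<alpha>)) (box l u) = (\<Prod>b\<in>Basis. (u - l) \<bullet> b)" .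
qed simp

lemma ennreal_div_div_cancel:
  fixes a b c :: ennreal assumes "c \<noteq> 0" "c \<noteq> \<infinity>" "a \<le> b"
  shows "(a / c) / (b / c) = a / b"
proof -
  obtain r where r: "c = ennreal r" "r > 0" using assms(1,2)
    by (cases c) (auto simp: ennreal_eq_0_iff not_le)
  show ?thesis
  proof (cases "b = \<infinity>")
    case True
    then have "b / c = \<infinity>" using r by (simp add: ennreal_top_divide)
    then show ?thesis using True by simp
  next
    case False
    then obtain y where y: "b = ennreal y" "y \<ge> 0" by (cases b) auto
    have "a \<noteq> \<infinity>" using assms(3) False by (auto simp: top_unique)
    then obtain x where x: "a = ennreal x" "x \<ge> 0" by (cases a) auto
    show ?thesis
    proof (cases "y = 0")
      case True then show ?thesis using x y assms(3) r by (simp add: divide_ennreal)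
    next
      case False
      then show ?thesis using x y r by (simp add: divide_ennreal)
    qed
  qed
qed

lemma uniform_distr:
  assumes [measurable]: "X \<in> measurable M N" "B \<in> sets N"
  shows "uniform_measure (distr M N X) B = distr (uniform_measure M (X -` B \<inter> space M)) N X"
proof -
  have "uniform_measure (distr M N X) B = density (distr M N X) (\<lambda>y. indicator B y / emeasure (distr M N X) B)"
    by (simp add: uniform_measure_def)
  also have "\<dots> = distr (density M (\<lambda>x. indicator B (X x) / emeasure (distr M N X) B)) N X"
    by (rule density_distr) measurable
  also have "density M (\<lambda>x. indicator B (X x) / emeasure (distr M N X) B)
      = density M (\<lambda>x. indicator (X -` B \<inter> space M) x / emeasure M (X -` B \<inter> space M))"
    by (rule density_cong) (auto simp: emeasure_distr split: split_indicator)
  finally show ?thesis by (simp add: uniform_measure_def)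
qed

lemma uniform_uniform:
  assumes [measurable]: "C \<in> sets T" "E \<in> sets T" and "emeasure T C \<noteq> 0" "emeasure T C \<noteq> \<infinity>"
  shows "uniform_measure (uniform_measure T C) E = uniform_measure T (C \<inter> E)"
proof (rule measure_eqI)
  fix S assume "S \<in> sets (uniform_measure (uniform_measure T C) E)"
  then have [measurable]: "S \<in> sets T" by simp
  have "emeasure T (C \<inter> (E \<inter> S)) \<le> emeasure T (C \<inter> E)" by (intro emeasure_mono) auto
  then show "emeasure (uniform_measure (uniform_measure T C) E) S = emeasure (uniform_measure T (C \<inter> E)) S"
    using assms by (simp add: ennreal_div_div_cancel Int_assoc del: emeasure_uniform_measure)
       (simp add: emeasure_uniform_measure ennreal_div_div_cancel Int_assoc)
qed simp

lemma mvm_meas[measurable]: "(\<lambda>x. (A::real^'n::finite^'m::finite) *v x) \<in> borel_measurable borel"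
  by (intro borel_measurable_continuous_onI matrix_vector_mult_linear_continuous_on)

definition tdens :: "real^'n::finite^'n \<Rightarrow> real \<Rightarrow> real^'n \<Rightarrow> ennreal" where
  "tdens \<Sigma> \<nu> x = ennreal
     (Gamma ((\<nu> + real CARD('n)) / 2)
       / (Gamma (\<nu> / 2) * (\<nu> * pi) powr (real CARD('n) / 2) * sqrt (det \<Sigma>))
       * (1 + (x \<bullet> (matrix_inv \<Sigma> *v x)) / \<nu>) powr (- (\<nu> + real CARD('n)) / 2))"

lemma tdens_meas[measurable]: "tdens \<Sigma> \<nu> \<in> borel_measurable borel"
  unfolding tdens_def by measurable

lemma student_t0: "student_t 0 \<Sigma> \<nu> = density lborel (tdens \<Sigma> \<nu>)"
  by (simp add: student_t_def tdens_def[abs_def])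

lemma student_t_rv: assumes "bij (\<alpha> :: 'n'::finite \<Rightarrow> 'n::finite)" "invertible \<Sigma>"
  shows "distr (student_t 0 \<Sigma> \<nu>) borel (rv \<alpha>) = student_t 0 (rix \<alpha> \<Sigma>) \<nu>"
proof -
  have card: "CARD('n') = CARD('n)" using assms(1) by (simp add: bij_betw_same_card)
  have eq: "tdens (rix \<alpha> \<Sigma>) \<nu> (rv \<alpha> x) = tdens \<Sigma> \<nu> x" for x
    by (simp add: tdens_def card rix_det[OF assms(1)] rix_inv[OF assms] rix_quad[OF assms(1)])
  have "student_t 0 (rix \<alpha> \<Sigma>) \<nu> = density (distr lborel borel (rv \<alpha>)) (tdens (rix \<alpha> \<Sigma>) \<nu>)"
    by (simp add: student_t0 lborel_rv[OF assms(1)])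
  also have "\<dots> = distr (density lborel (\<lambda>x. tdens (rix \<alpha> \<Sigma>) \<nu> (rv \<alpha> x))) borel (rv \<alpha>)"
    by (rule density_distr) measurable
  finally show ?thesis by (simp add: eq student_t0)
qed

definition assoc_s :: "('a + 'b) + 'c \<Rightarrow> 'a + ('b + 'c)" where
  "assoc_s x = (case x of Inl (Inl a) \<Rightarrow> Inl a | Inl (Inr b) \<Rightarrow> Inr (Inl b) | Inr c \<Rightarrow> Inr (Inr c))"

lemma assoc_s_simps[simp]: "assoc_s (Inl (Inl a)) = Inl a" "assoc_s (Inl (Inr b)) = Inr (Inl b)"
  "assoc_s (Inr c) = Inr (Inr c)"
  by (simp_all add: assoc_s_def)

lemma bij_assoc_s: "bij assoc_s"
proof (rule bij_betw_byWitness[where f'="\<lambda>y. case y of Inl a \<Rightarrow> Inl (Inl a) | Inr (Inl b) \<Rightarrow> Inl (Inr b) | Inr (Inr c) \<Rightarrow> Inr c"])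
qed (auto simp: assoc_s_def split: sum.splits)

lemma vfst_cont[continuous_intros]: "continuous_on S (vfst :: real^('a::finite+'b::finite) \<Rightarrow> _)"
  unfolding vfst_def by (intro continuous_on_vec_lambda continuous_on_component continuous_on_id)
lemma vsnd_cont[continuous_intros]: "continuous_on S (vsnd :: real^('a::finite+'b::finite) \<Rightarrow> _)"
  unfolding vsnd_def by (intro continuous_on_vec_lambda continuous_on_component continuous_on_id)

lemma vfst_meas[measurable]: "(vfst :: real^('a::finite+'b::finite) \<Rightarrow> _) \<in> borel_measurable borel"
  unfolding vfst_def by (intro borel_measurable_continuous_onI continuous_on_vec_lambda continuous_on_component continuous_on_id)
lemma vsnd_meas[measurable]: "(vsnd :: real^('a::finite+'b::finite) \<Rightarrow> _) \<in> borel_measurable borel"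
  unfolding vsnd_def by (intro borel_measurable_continuous_onI continuous_on_vec_lambda continuous_on_component continuous_on_id)

lemma pos_def_invertible: assumes "pos_def_mat (A::real^'n::finite^'n)" shows "invertible A"
proof -
  have "\<forall>x. A *v x = 0 \<longrightarrow> x = 0" using assms unfolding pos_def_mat_def
    by (metis inner_zero_right less_irrefl)
  then show ?thesis using matrix_left_invertible_ker invertible_left_inverse by blast
qed

lemma pos_def_diag: assumes "pos_def_mat (A::real^'n::finite^'n)" shows "A $ i $ i > 0"
proof -
  have "axis i 1 \<bullet> (A *v axis i 1) > 0" using assms unfolding pos_def_mat_def
    by (metis axis_eq_0_iff zero_neq_one)
  moreover have "axis i 1 \<bullet> (A *v axis i 1) = A $ i $ i"
    by (simp add: inner_vec_def matrix_vector_mult_def axis_def if_distrib[where f="\<lambda>x. x * _"] if_distrib[where f="\<lambda>x. _ * x"] cong: if_cong)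
  ultimately show ?thesis by simp
qed

lemma pos_def_sym: assumes "pos_def_mat (A::real^'n::finite^'n)" shows "A $ i $ j = A $ j $ i"
  using assms unfolding pos_def_mat_def by (metis transpose_def vec_lambda_beta)

lemma Sigma_rix:
  assumes sym: "\<And>i j. \<Omega> $ i $ j = \<Omega> $ j $ i"
  shows "blockmat (blockmat \<Gamma> (transpose (rows1 \<Delta>)) (rows1 \<Delta>) (blk11 (corr_of \<Omega>)))
           (transpose (hcat (rows2 \<Delta>) (blk21 (corr_of \<Omega>)))) (hcat (rows2 \<Delta>) (blk21 (corr_of \<Omega>)))
           (corr_of (blk22 \<Omega>))
       = rix assoc_s (blockmat \<Gamma> (transpose \<Delta>) \<Delta> (corr_of \<Omega>))"
  unfolding rix_def vec_eq_iff
  apply (intro allI)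
  subgoal for i j
    by (auto simp: assoc_s_def blockmat_def transpose_def rows1_def rows2_def blk11_def blk21_def blk22_def hcat_def corr_of_def sym mult.commute split: sum.splits)
  done

theorem proposition10:
  fixes M :: "'s measure"
    and Y :: "'s \<Rightarrow> real^('d1::finite + 'd2::finite)"
    and \<xi> :: "real^('d1 + 'd2)"
    and \<Omega> :: "real^('d1 + 'd2)^('d1 + 'd2)"
    and \<Delta> :: "real^('m::finite)^('d1 + 'd2)"
    and \<tau> :: "real^'m"
    and \<Gamma> :: "real^'m^'m"
    and \<nu> :: real
  assumes "prob_space M"
    and "Y \<in> borel_measurable M"
    and "SUT_params \<Omega> \<Delta> \<Gamma> \<nu>"
    and "distr M borel Y = SUT \<xi> \<Omega> \<Delta> \<tau> \<Gamma> \<nu>"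
  shows "distr (uniform_measure M {x \<in> space M. \<forall>i. vfst (Y x) $ i > 0}) borel (\<lambda>x. vsnd (Y x))
       = SUT (vsnd \<xi>) (blk22 \<Omega>)
             (hcat (rows2 \<Delta>) (blk21 (corr_of \<Omega>)))
             (vjoin \<tau> (\<chi> i. vfst \<xi> $ i / sqrt (\<Omega> $ Inl i $ Inl i)))
             (blockmat \<Gamma> (transpose (rows1 \<Delta>)) (rows1 \<Delta>) (blk11 (corr_of \<Omega>)))
             \<nu>"
proof -
  note [measurable] = assms(2)
  have P: "pos_def_mat \<Omega>" "pos_def_mat (blockmat \<Gamma> (transpose \<Delta>) \<Delta> (corr_of \<Omega>))"
    using assms(3) by (auto simp: SUT_params_def)
  define \<Sigma> where "\<Sigma> = blockmat \<Gamma> (transpose \<Delta>) \<Delta> (corr_of \<Omega>)"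
  define T where "T = student_t (0::real^('m+('d1+'d2))) \<Sigma> \<nu>"
  define C where "C = {u::real^('m+('d1+'d2)). \<forall>i. vfst u $ i + \<tau> $ i > 0}"
  define g where "g = (\<lambda>u::real^('m+('d1+'d2)). \<chi> j. \<xi> $ j + sqrt (\<Omega> $ j $ j) * vsnd u $ j)"
  define B1 where "B1 = {y::real^('d1+'d2). \<forall>i. vfst y $ i > 0}"
  define \<tau>' where "\<tau>' = vjoin \<tau> (\<chi> i. vfst \<xi> $ i / sqrt (\<Omega> $ Inl i $ Inl i))"
  define C' where "C' = {u::real^(('m+'d1)+'d2). \<forall>i. vfst u $ i + \<tau>' $ i > 0}"
  define g' where "g' = (\<lambda>u::real^(('m+'d1)+'d2). \<chi> j. vsnd \<xi> $ j + sqrt (blk22 \<Omega> $ j $ j) * vsnd u $ j)"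
  have g_meas[measurable]: "g \<in> borel_measurable borel"
    unfolding g_def by (intro borel_measurable_continuous_onI continuous_intros)
  have g'_meas[measurable]: "g' \<in> borel_measurable borel"
    unfolding g'_def by (intro borel_measurable_continuous_onI continuous_intros)
  have C_meas[measurable]: "C \<in> sets borel" unfolding C_def by measurable
  have C'_meas[measurable]: "C' \<in> sets borel" unfolding C'_def by measurable
  have B1_meas[measurable]: "B1 \<in> sets borel" unfolding B1_def by measurable
  have spT[simp]: "space T = UNIV" "sets T = sets borel" by (simp_all add: T_def student_t_def)
  have mU[simp]: "\<And>A (N::'z measure). measurable (uniform_measure T A) N = measurable borel N"
    by (rule measurable_cong_sets) auto
  have mT[simp]: "\<And>(N::'z measure). measurable T N = measurable borel N"
    by (rule measurable_cong_sets) auto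
  have mM[simp]: "\<And>A (N::'z measure). measurable (uniform_measure M A) N = measurable M N"
    by (rule measurable_cong_sets) auto
  have SUT1: "SUT \<xi> \<Omega> \<Delta> \<tau> \<Gamma> \<nu> = distr (uniform_measure T C) borel g"
    by (simp add: SUT_def T_def \<Sigma>_def C_def g_def)
  have rixS: "blockmat (blockmat \<Gamma> (transpose (rows1 \<Delta>)) (rows1 \<Delta>) (blk11 (corr_of \<Omega>)))
           (transpose (hcat (rows2 \<Delta>) (blk21 (corr_of \<Omega>)))) (hcat (rows2 \<Delta>) (blk21 (corr_of \<Omega>)))
           (corr_of (blk22 \<Omega>)) = rix assoc_s \<Sigma>"
    unfolding \<Sigma>_def by (rule Sigma_rix) (rule pos_def_sym[OF P(1)])
  have T': "student_t 0 (rix assoc_s \<Sigma>) \<nu> = distr T borel (rv assoc_s)"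
    unfolding T_def using student_t_rv[OF bij_assoc_s pos_def_invertible[OF P(2)[folded \<Sigma>_def]]] by simp
  have SUT2: "SUT (vsnd \<xi>) (blk22 \<Omega>)
             (hcat (rows2 \<Delta>) (blk21 (corr_of \<Omega>)))
             (vjoin \<tau> (\<chi> i. vfst \<xi> $ i / sqrt (\<Omega> $ Inl i $ Inl i)))
             (blockmat \<Gamma> (transpose (rows1 \<Delta>)) (rows1 \<Delta>) (blk11 (corr_of \<Omega>)))
             \<nu> = distr (uniform_measure (distr T borel (rv assoc_s)) C') borel g'"
    unfolding SUT_def rixS T' C'_def g'_def \<tau>'_def ..
  have "prob_space (distr M borel Y)"
    using assms(1) by (intro prob_space.prob_space_distr) auto
  then have "emeasure (distr M borel Y) UNIV = 1"
    using prob_space.emeasure_space_1 by fastforce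
  moreover have "emeasure (distr (uniform_measure T C) borel g) UNIV
      = emeasure (uniform_measure T C) (g -` UNIV \<inter> space (uniform_measure T C))"
    by (rule emeasure_distr) auto
  moreover have "emeasure (uniform_measure T C) UNIV = emeasure T (C \<inter> UNIV) / emeasure T C"
    by (rule emeasure_uniform_measure) auto
  ultimately have "emeasure T C / emeasure T C = 1"
    by (simp add: assms(4) SUT1)
  then have TC: "emeasure T C \<noteq> 0" "emeasure T C \<noteq> \<infinity>" by auto
  have sp: "\<And>b. sqrt (\<Omega> $ Inl b $ Inl b) > 0" using pos_def_diag[OF P(1)] by simp
  have key: "(x + y / sqrt (\<Omega> $ Inl b $ Inl b) > 0) \<longleftrightarrow> (y + sqrt (\<Omega> $ Inl b $ Inl b) * x > 0)" for x y b
    using sp[of b] by (simp add: field_simps)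
  have seteq: "rv assoc_s -` C' \<inter> space T = C \<inter> g -` B1"
    by (auto simp: C'_def C_def B1_def g_def \<tau>'_def rv_def vfst_def vsnd_def vjoin_def key split_sum_all)
  have geq: "g' \<circ> rv assoc_s = vsnd \<circ> g"
    by (auto simp: g'_def g_def rv_def vsnd_def blk22_def fun_eq_iff)
  have Aeq: "{x \<in> space M. \<forall>i. vfst (Y x) $ i > 0} = Y -` B1 \<inter> space M" by (auto simp: B1_def)
  have "distr (uniform_measure M {x \<in> space M. \<forall>i. vfst (Y x) $ i > 0}) borel (\<lambda>x. vsnd (Y x))
      = distr (distr (uniform_measure M (Y -` B1 \<inter> space M)) borel Y) borel vsnd"
    unfolding Aeq by (subst distr_distr) (auto simp: comp_def)
  also have "\<dots> = distr (uniform_measure (distr M borel Y) B1) borel vsnd"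
    by (subst uniform_distr) auto
  also have "\<dots> = distr (distr (uniform_measure (uniform_measure T C) (g -` B1 \<inter> UNIV)) borel g) borel vsnd"
    unfolding assms(4) SUT1 by (subst uniform_distr) auto
  also have "\<dots> = distr (uniform_measure T (C \<inter> g -` B1)) borel (vsnd \<circ> g)"
  proof -
    have gB: "g -` B1 \<in> sets T" using measurable_sets_borel[OF g_meas B1_meas] by simp
    have "uniform_measure (uniform_measure T C) (g -` B1 \<inter> UNIV) = uniform_measure T (C \<inter> g -` B1)"
      using uniform_uniform[of C T "g -` B1"] gB TC by simp
    then show ?thesis by (simp only:) (subst distr_distr, auto)
  qed
  also have "\<dots> = distr (uniform_measure T (rv assoc_s -` C' \<inter> space T)) borel (g' \<circ> rv assoc_s)"
    unfolding seteq geq ..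
  also have "\<dots> = distr (uniform_measure (distr T borel (rv assoc_s)) C') borel g'"
    by (subst uniform_distr) (auto simp: distr_distr)
  finally show ?thesis using SUT2 by simp
qed

end
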